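(* $$\sum_{i,j,k\ge0}\frac{q^{i^2+j^2+k^2}}{(q)_{i+j-k}(q)_{i+k-j}(q)_{j+k-i}}=\frac12(-\sqrt q;q)_\infty\sum_{i\ge0}\frac{(-\sqrt q;q)_i\,q^{\frac32 i^2}}{(q)_{2i}}+\frac12(\sqrt q;q)_\infty\sum_{i\ge0}\frac{(\sqrt q;q)_i\,q^{\frac32 i^2}(-1)^i}{(q)_{2i}}.$$
   Context: $0<q<1$, $\sqrt q=q^{1/2}$. $(a;q)_n=\prod_{j=0}^{n-1}(1-aq^j)$ for $n\ge 0$, $(a;q)_\infty=\lim_{n\to\infty}(a;q)_n$, $(q)_n=(q;q)_n$, and $1/(q)_n:=0$ for $n<0$. *)

theory Defs
  imports "HOL-Analysis.Analysis"
begin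

definition qpoch :: "real \<Rightarrow> real \<Rightarrow> nat \<Rightarrow> real" where
  "qpoch a q n = (\<Prod>j<n. (1 - a * q ^ j))"

definition qpoch_inf :: "real \<Rightarrow> real \<Rightarrow> real" where
  "qpoch_inf a q = lim (\<lambda>n. qpoch a q n)"

text \<open>1/(q)_n for integer n, with the convention 1/(q)_n = 0 for n < 0.\<close>
definition qinv :: "real \<Rightarrow> int \<Rightarrow> real" where
  "qinv q n = (if n < 0 then 0 else 1 / qpoch q q (nat n))"

end

theory Submission
  imports Defs
begin

definition tri :: "nat \<Rightarrow> nat" where "tri n = n * (n - 1) div 2"

lemma tri_0[simp]: "tri 0 = 0" by (simp add: tri_def)
lemma tri_Suc[simp]: "tri (Suc n) = tri n + n"
proof -
  have "Suc n * n = n * (n - 1) + 2 * n" by (cases n) (auto simp: algebra_simps)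
  moreover have "even (n * (n - 1))" by (cases n) auto
  ultimately show ?thesis unfolding tri_def by (auto elim!: evenE)
qed
lemma tri2: "2 * tri n + n = n\<^sup>2"
  by (induction n) (auto simp: power2_eq_square algebra_simps)

lemma summable_tri_geom:
  fixes q r :: real
  assumes q: "0 < q" "q < 1" and r: "0 \<le> r"
  shows "summable (\<lambda>n. q ^ tri n * r ^ n)"
proof -
  have "(\<lambda>n. q ^ n * r) \<longlonglongrightarrow> 0 * r"
    by (intro tendsto_mult tendsto_const LIMSEQ_power_zero) (use q in auto)
  then have "eventually (\<lambda>n. q ^ n * r < 1/2) sequentially"
    by (intro order_tendstoD) auto
  then obtain N where N: "\<And>n. n \<ge> N \<Longrightarrow> q ^ n * r < 1/2"
    by (auto simp: eventually_sequentially)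
  show ?thesis
  proof (rule summable_ratio_test[of "1/2" N])
    fix n assume "n \<ge> N"
    have "norm (q ^ tri (Suc n) * r ^ Suc n) = (q ^ n * r) * (q ^ tri n * r ^ n)"
      using q r by (simp add: power_add abs_mult)
    also have "\<dots> \<le> 1/2 * (q ^ tri n * r ^ n)"
      using N[OF \<open>n \<ge> N\<close>] q r by (intro mult_right_mono) auto
    also have "\<dots> = 1/2 * norm (q ^ tri n * r ^ n)" using q r by simp
    finally show "norm (q ^ tri (Suc n) * r ^ Suc n) \<le> 1/2 * norm (q ^ tri n * r ^ n)" .
  qed auto
qed

lemma qpoch_0[simp]: "qpoch a q 0 = 1" by (simp add: qpoch_def)
lemma qpoch_Suc: "qpoch a q (Suc n) = qpoch a q n * (1 - a * q ^ n)"
  by (simp add: qpoch_def)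

lemma qpoch_qq_lower:
  assumes "0 < q" "q < 1"
  shows "(1 - q) ^ n \<le> qpoch q q n"
  unfolding qpoch_def
proof -
  have "(\<Prod>j<n. (1 - q)) \<le> (\<Prod>j<n. (1 - q * q ^ j))"
  proof (rule prod_mono)
    fix j assume "j \<in> {..<n}"
    have "q * q ^ j \<le> q * 1" using assms by (intro mult_left_mono power_le_one) auto
    then show "0 \<le> 1 - q \<and> 1 - q \<le> 1 - q * q ^ j" using assms by auto
  qed
  then show "(1 - q) ^ n \<le> (\<Prod>j<n. (1 - q * q ^ j))" by simp
qed

lemma qpoch_qq_pos:
  assumes "0 < q" "q < 1"
  shows "0 < qpoch q q n"
  using qpoch_qq_lower[OF assms, of n] assms
  by (meson less_le_trans zero_less_power diff_gt_0_iff_gt)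

lemma qpoch_pos:
  assumes "\<bar>a\<bar> < 1" "0 < q" "q < 1"
  shows "0 < qpoch a q n"
  unfolding qpoch_def
proof (rule prod_pos)
  fix j assume "j \<in> {..<n}"
  have "\<bar>a * q ^ j\<bar> \<le> \<bar>a\<bar>" using assms
    by (simp add: abs_mult mult_left_le power_le_one)
  then show "0 < 1 - a * q ^ j" using assms by (auto simp: abs_le_iff)
qed

lemma qpoch_shift: "qpoch a q (i + n) = qpoch a q i * qpoch (a * q ^ i) q n"
  by (induction n) (auto simp: qpoch_Suc power_add algebra_simps)


definition ec :: "real \<Rightarrow> nat \<Rightarrow> real" where "ec q n = q ^ tri n / qpoch q q n"
definition ef :: "real \<Rightarrow> real \<Rightarrow> real" where "ef q z = (\<Sum>n. ec q n * z ^ n)"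

lemma ec_bound:
  assumes q: "0 < q" "q < 1" and z: "\<bar>z\<bar> \<le> 1"
  shows "norm (ec q n * z ^ n) \<le> q ^ tri n * (1 / (1 - q)) ^ n"
proof -
  have P: "0 < qpoch q q n" using qpoch_qq_pos[OF q] .
  have "norm (ec q n * z ^ n) = q ^ tri n / qpoch q q n * \<bar>z\<bar> ^ n"
    using P q by (simp add: ec_def abs_mult power_abs)
  also have "\<dots> \<le> q ^ tri n / qpoch q q n * 1"
    using P q z by (intro mult_left_mono power_le_one) auto
  also have "\<dots> \<le> q ^ tri n / (1 - q) ^ n"
    using P q qpoch_qq_lower[OF q, of n] by (simp only: mult_1_right, intro divide_left_mono) auto
  also have "\<dots> = q ^ tri n * (1 / (1 - q)) ^ n" by (simp add: power_divide)
  finally show ?thesis .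
qed

lemma ec_summable_norm:
  assumes q: "0 < q" "q < 1" and z: "\<bar>z\<bar> \<le> 1"
  shows "summable (\<lambda>n. norm (ec q n * z ^ n))"
  by (rule summable_comparison_test[OF _ summable_tri_geom[OF q, of "1/(1-q)"]])
     (use ec_bound[OF q z] q in auto)

lemma ec_sums:
  assumes q: "0 < q" "q < 1" and z: "\<bar>z\<bar> \<le> 1"
  shows "(\<lambda>n. ec q n * z ^ n) sums ef q z"
  unfolding ef_def using summable_norm_cancel[OF ec_summable_norm[OF q z]]
  by (simp add: summable_sums)

lemma ef_funeq:
  assumes q: "0 < q" "q < 1" and z: "\<bar>z\<bar> \<le> 1"
  shows "ef q z = (1 + z) * ef q (q * z)"
proof -
  have z': "\<bar>q * z\<bar> \<le> 1" using q z by (simp add: abs_mult mult_le_one)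
  have s1: "(\<lambda>n. ec q n * z ^ n - ec q n * (q * z) ^ n) sums (ef q z - ef q (q * z))"
    by (intro sums_diff ec_sums q z z')
  have s2: "(\<lambda>m. z * (ec q m * (q * z) ^ m)) sums (z * ef q (q * z))"
    by (intro sums_mult ec_sums q z')
  have eq: "ec q (Suc m) * z ^ Suc m - ec q (Suc m) * (q * z) ^ Suc m = z * (ec q m * (q * z) ^ m)" for m
  proof -
    have P: "0 < qpoch q q m" "1 - q * q ^ m \<noteq> 0"
      using qpoch_qq_pos[OF q] q power_Suc_less_one[OF q, of m] by auto
    have e: "ec q (Suc m) * (1 - q * q ^ m) = q ^ m * ec q m"
      using P by (simp add: ec_def qpoch_Suc power_add)
    have "ec q (Suc m) * z ^ Suc m - ec q (Suc m) * (q * z) ^ Suc m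
        = (ec q (Suc m) * (1 - q * q ^ m)) * z * z ^ m"
      by (simp add: power_mult_distrib algebra_simps)
    also have "\<dots> = z * (ec q m * (q * z) ^ m)" by (simp only: e) (simp add: power_mult_distrib)
    finally show ?thesis .
  qed
  have "(\<lambda>m. ec q (Suc m) * z ^ Suc m - ec q (Suc m) * (q * z) ^ Suc m) sums (z * ef q (q * z))"
    using s2 by (simp only: eq)
  then have "(\<lambda>n. ec q n * z ^ n - ec q n * (q * z) ^ n) sums (z * ef q (q * z) + 0)"
    by (subst (asm) sums_Suc_iff) simp
  with s1 have "ef q z - ef q (q * z) = z * ef q (q * z)" by (simp add: sums_unique2)
  then show ?thesis by (simp add: algebra_simps)
qed

lemma ef_iter:
  assumes q: "0 < q" "q < 1" and z: "\<bar>z\<bar> \<le> 1"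
  shows "ef q z = qpoch (- z) q n * ef q (q ^ n * z)"
proof (induction n)
  case (Suc n)
  have zn: "\<bar>q ^ n * z\<bar> \<le> 1" using q z by (simp add: abs_mult mult_le_one power_le_one)
  show ?case using Suc ef_funeq[OF q zn]
    by (simp add: qpoch_Suc algebra_simps)
qed simp

lemma ef_0: "ef q 0 = 1"
  unfolding ef_def using powser_zero[of "ec q"] by (simp add: ec_def)

lemma euler_lim:
  assumes q: "0 < q" "q < 1" and z: "\<bar>z\<bar> \<le> 1"
  shows "(\<lambda>n. qpoch (- z) q n) \<longlonglongrightarrow> ef q z"
proof -
  have cont: "isCont (ef q) 0"
  proof -
    have "summable (\<lambda>n. ec q n * 1 ^ n)"
      using summable_norm_cancel[OF ec_summable_norm[OF q, of 1]] by simp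
    from isCont_powser[OF this, of 0] show ?thesis unfolding ef_def[abs_def] by simp
  qed
  have "(\<lambda>n. q ^ n * z) \<longlonglongrightarrow> 0 * z"
    by (intro tendsto_mult tendsto_const LIMSEQ_power_zero) (use q in auto)
  then have "(\<lambda>n. ef q (q ^ n * z)) \<longlonglongrightarrow> ef q 0"
    using isCont_tendsto_compose[OF cont] by simp
  then have L: "(\<lambda>n. ef q (q ^ n * z)) \<longlonglongrightarrow> 1" by (simp add: ef_0)
  then have ev: "eventually (\<lambda>n. ef q (q ^ n * z) \<noteq> 0) sequentially"
    by (rule tendsto_imp_eventually_ne) simp
  have "(\<lambda>n. ef q z / ef q (q ^ n * z)) \<longlonglongrightarrow> ef q z / 1"
    by (intro tendsto_divide tendsto_const L) simp
  then have "(\<lambda>n. ef q z / ef q (q ^ n * z)) \<longlonglongrightarrow> ef q z" by simp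
  then show ?thesis
  proof (rule Lim_transform_eventually)
    show "eventually (\<lambda>n. ef q z / ef q (q ^ n * z) = qpoch (- z) q n) sequentially"
      using ev by eventually_elim (subst ef_iter[OF q z, of n], simp)
  qed
qed

lemma qpoch_inf_eq:
  assumes q: "0 < q" "q < 1" and z: "\<bar>z\<bar> \<le> 1"
  shows "qpoch_inf (- z) q = ef q z"
  unfolding qpoch_inf_def using euler_lim[OF q z] by (rule limI)


fun qb :: "real \<Rightarrow> nat \<Rightarrow> nat \<Rightarrow> real" where
  "qb q 0 k = (if k = 0 then 1 else 0)"
| "qb q (Suc n) 0 = 1"
| "qb q (Suc n) (Suc k) = qb q n k + q ^ Suc k * qb q n (Suc k)"

lemma qb_zero: "n < k \<Longrightarrow> qb q n k = 0"
proof (induction n arbitrary: k)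
  case (Suc n)
  then obtain m where "k = Suc m" by (cases k) auto
  with Suc show ?case by auto
qed simp

lemma qb_n0[simp]: "qb q n 0 = 1" by (cases n) auto

lemma qb_closed: "k \<le> n \<Longrightarrow> qb q n k * (qpoch q q k * qpoch q q (n - k)) = qpoch q q n"
proof (induction n arbitrary: k)
  case 0 then show ?case by simp
next
  case (Suc n)
  show ?case
  proof (cases k)
    case 0 then show ?thesis by simp
  next
    case (Suc m)
    with Suc.prems have mn: "m \<le> n" by simp
    have t1: "qb q n m * (qpoch q q (Suc m) * qpoch q q (n - m)) = qpoch q q n * (1 - q * q ^ m)"
      using Suc.IH[OF mn] by (simp add: qpoch_Suc algebra_simps)
    have t2: "q ^ Suc m * qb q n (Suc m) * (qpoch q q (Suc m) * qpoch q q (n - m))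
              = q ^ Suc m * qpoch q q n * (1 - q ^ (n - m))"
    proof (cases "m = n")
      case True then show ?thesis by (simp add: qb_zero)
    next
      case False
      then have mn': "Suc m \<le> n" using mn by simp
      have "n - m = Suc (n - Suc m)" using mn' by simp
      then have eqP: "qpoch q q (n - m) = qpoch q q (n - Suc m) * (1 - q ^ (n - m))"
        by (simp add: qpoch_Suc)
      have "q ^ Suc m * qb q n (Suc m) * (qpoch q q (Suc m) * qpoch q q (n - m))
        = q ^ Suc m * (1 - q ^ (n - m)) * (qb q n (Suc m) * (qpoch q q (Suc m) * qpoch q q (n - Suc m)))"
        unfolding eqP by (simp only: ac_simps)
      also have "\<dots> = q ^ Suc m * (1 - q ^ (n - m)) * qpoch q q n"
        by (simp only: Suc.IH[OF mn'])
      finally show ?thesis by (simp only: mult_ac)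
    qed
    have "qb q (Suc n) k * (qpoch q q k * qpoch q q (Suc n - k))
        = qb q n m * (qpoch q q (Suc m) * qpoch q q (n - m))
          + q ^ Suc m * qb q n (Suc m) * (qpoch q q (Suc m) * qpoch q q (n - m))"
      using Suc by (simp add: algebra_simps)
    also have "\<dots> = qpoch q q n * (1 - q * q ^ n)"
    proof -
      have "q ^ Suc m * (1 - q ^ (n - m)) = q * q ^ m - q * q ^ n"
        using mn by (simp add: algebra_simps power_add[symmetric])
      moreover have "q ^ n = q ^ m * q ^ (n - m)" using mn by (simp add: power_add[symmetric])
      ultimately show ?thesis unfolding t1 t2 by (simp add: algebra_simps)
    qed
    also have "\<dots> = qpoch q q (Suc n)" by (simp add: qpoch_Suc)
    finally show ?thesis .
  qed
qed

lemma qbin_thm: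
  "(\<Prod>j<N. u + v * q ^ j) = (\<Sum>k\<le>N. qb q N k * q ^ tri k * v ^ k * u ^ (N - k))"
proof (induction N arbitrary: v)
  case 0 then show ?case by simp
next
  case (Suc N)
  have "(\<Prod>j<Suc N. u + v * q ^ j) = (u + v) * (\<Prod>j<N. u + (v * q) * q ^ j)"
    by (subst prod.lessThan_Suc_shift) (simp add: algebra_simps)
  also have "\<dots> = (u + v) * (\<Sum>k\<le>N. qb q N k * q ^ tri k * (v * q) ^ k * u ^ (N - k))"
    by (simp only: Suc.IH)
  also have "\<dots> = (\<Sum>k\<le>N. u * (qb q N k * q ^ tri k * (v * q) ^ k * u ^ (N - k)))
                 + (\<Sum>k\<le>N. v * (qb q N k * q ^ tri k * (v * q) ^ k * u ^ (N - k)))"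
    by (simp add: distrib_right sum_distrib_left sum.distrib)
  also have "(\<Sum>k\<le>N. u * (qb q N k * q ^ tri k * (v * q) ^ k * u ^ (N - k)))
      = (\<Sum>k\<le>Suc N. qb q N k * q ^ tri k * q ^ k * v ^ k * u ^ (Suc N - k))"
  proof -
    have "(\<Sum>k\<le>Suc N. qb q N k * q ^ tri k * q ^ k * v ^ k * u ^ (Suc N - k))
        = (\<Sum>k\<le>N. qb q N k * q ^ tri k * q ^ k * v ^ k * u ^ (Suc N - k))"
      by (simp add: qb_zero)
    also have "\<dots> = (\<Sum>k\<le>N. u * (qb q N k * q ^ tri k * (v * q) ^ k * u ^ (N - k)))"
      by (intro sum.cong refl) (simp add: Suc_diff_le power_mult_distrib algebra_simps)
    finally show ?thesis by simp
  qed
  also have "(\<Sum>k\<le>N. v * (qb q N k * q ^ tri k * (v * q) ^ k * u ^ (N - k)))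
      = (\<Sum>k\<le>Suc N. (if k = 0 then 0 else qb q N (k - 1) * q ^ tri (k - 1) * q ^ (k - 1) * v ^ k * u ^ (Suc N - k)))"
    by (subst sum.atMost_Suc_shift) (simp add: power_mult_distrib algebra_simps)
  also have "(\<Sum>k\<le>Suc N. qb q N k * q ^ tri k * q ^ k * v ^ k * u ^ (Suc N - k))
     + (\<Sum>k\<le>Suc N. (if k = 0 then 0 else qb q N (k - 1) * q ^ tri (k - 1) * q ^ (k - 1) * v ^ k * u ^ (Suc N - k)))
     = (\<Sum>k\<le>Suc N. qb q (Suc N) k * q ^ tri k * v ^ k * u ^ (Suc N - k))"
    unfolding sum.distrib[symmetric]
  proof (intro sum.cong refl)
    fix k assume "k \<in> {..Suc N}"
    show "qb q N k * q ^ tri k * q ^ k * v ^ k * u ^ (Suc N - k) +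
         (if k = 0 then 0 else qb q N (k - 1) * q ^ tri (k - 1) * q ^ (k - 1) * v ^ k * u ^ (Suc N - k))
       = qb q (Suc N) k * q ^ tri k * v ^ k * u ^ (Suc N - k)"
    proof (cases k)
      case 0 then show ?thesis by simp
    next
      case (Suc m) then show ?thesis by (simp add: power_add algebra_simps)
    qed
  qed
  finally show ?case .
qed


lemma prod_split_add: fixes m n :: nat shows "(\<Prod>j<m + n. (f j::real)) = (\<Prod>j<m. f j) * (\<Prod>j<n. f (m + j)) "
  by (induction n) (auto simp: mult_ac)

lemma prod_reflect: "(\<Prod>j<n. f (n - Suc j)) = (\<Prod>j<n. (f j :: real))"
proof (induction n)
  case (Suc n)
  have "(\<Prod>j<Suc n. f (Suc n - Suc j)) = f n * (\<Prod>j<n. f (n - Suc j))"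
    by (subst prod.lessThan_Suc_shift) simp
  then show ?case using Suc by (simp add: mult_ac)
qed simp

lemma prod_pow_tri: "(\<Prod>j<n. (x::real) ^ j) = x ^ tri n"
  by (induction n) (auto simp: power_add)

lemma exp_id1: "a \<le> 2 * i \<Longrightarrow> 2 * i + 2 * tri a + (2 * i - 1) * (2 * i - a) = a\<^sup>2 + (2 * i - a)\<^sup>2 + a * (2 * i - a)"
proof -
  assume "a \<le> 2 * i"
  then obtain b where b: "2 * i = a + b" by (metis le_add_diff_inverse)
  have h1: "2 * tri a + a = a * a" using tri2[of a] by (simp add: power2_eq_square)
  have e1: "2 * i - a = b" "2 * i - 1 = a + b - 1" using b by auto
  show ?thesis
  proof (cases "a + b")
    case 0 then show ?thesis using b by (simp add: tri_def)
  next
    case (Suc s)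
    have h2: "(a + b - 1) * b + b = (a + b) * b" using Suc by (simp add: algebra_simps)
    have h3: "(a + b) * b = a * b + b * b" by (simp add: algebra_simps)
    show ?thesis unfolding e1 power2_eq_square using h1 h2 h3 b by linarith
  qed
qed

lemma exp_id2: "2 * i + 2 * tri i + (2 * i - 1) * i = 3 * i\<^sup>2"
proof (cases i)
  case 0 then show ?thesis by simp
next
  case (Suc m)
  show ?thesis using tri2[of i] Suc by (simp add: power2_eq_square algebra_simps)
qed

lemma prod_lemma:
  fixes y :: real
  shows "y ^ (2 * i) * (\<Prod>j<2 * i. y ^ (2 * i - 1) + (y\<^sup>2) ^ j)
       = y ^ (3 * i\<^sup>2) * (\<Prod>j<i. 1 + y * (y\<^sup>2) ^ j)\<^sup>2"
proof -
  let ?e = "2 * i - 1"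
  let ?R = "\<Prod>j<i. 1 + y * (y\<^sup>2) ^ j"
  show ?thesis
  proof (cases i)
    case 0 then show ?thesis by simp
  next
    case (Suc m)
    have p2: "(\<Prod>j<i. y ^ ?e + (y\<^sup>2) ^ (i + j)) = (y ^ ?e) ^ i * ?R"
    proof -
      have "y ^ ?e + (y\<^sup>2) ^ (i + j) = y ^ ?e * (1 + y * (y\<^sup>2) ^ j)" for j
      proof -
        have ex: "2 * (i + j) = ?e + 1 + 2 * j" using Suc by simp
        have "(y\<^sup>2) ^ (i + j) = y ^ (2 * (i + j))" by (metis power_mult)
        also have "\<dots> = y ^ ?e * (y * (y\<^sup>2) ^ j)" unfolding ex by (simp add: power_add power_mult)
        finally show ?thesis by (simp add: algebra_simps)
      qed
      then show ?thesis by (simp add: prod.distrib)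
    qed
    have p1: "(\<Prod>j<i. y ^ ?e + (y\<^sup>2) ^ j) = (y\<^sup>2) ^ tri i * ?R"
    proof -
      have "y ^ ?e + (y\<^sup>2) ^ j = (y\<^sup>2) ^ j * (1 + y * (y\<^sup>2) ^ (i - Suc j))" if "j < i" for j
      proof -
        have "y ^ ?e = y ^ (2 * j + 1 + 2 * (i - Suc j))" using that by (intro arg_cong[where f="(^) y"]) simp
        also have "\<dots> = (y\<^sup>2) ^ j * (y * (y\<^sup>2) ^ (i - Suc j))"
          by (simp only: power_add power_mult power_one_right mult_ac) (metis power_mult mult.commute)
        finally show ?thesis by (simp add: algebra_simps)
      qed
      then have "(\<Prod>j<i. y ^ ?e + (y\<^sup>2) ^ j) = (\<Prod>j<i. (y\<^sup>2) ^ j * (1 + y * (y\<^sup>2) ^ (i - Suc j)))"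
        by (intro prod.cong) auto
      also have "\<dots> = (\<Prod>j<i. (y\<^sup>2) ^ j) * (\<Prod>j<i. 1 + y * (y\<^sup>2) ^ (i - Suc j))"
        by (simp add: prod.distrib)
      also have "\<dots> = (y\<^sup>2) ^ tri i * ?R"
        by (simp only: prod_pow_tri prod_reflect[of "\<lambda>j. 1 + y * (y\<^sup>2) ^ j"])
      finally show ?thesis .
    qed
    have "(\<Prod>j<2 * i. y ^ ?e + (y\<^sup>2) ^ j) = (\<Prod>j<i. y ^ ?e + (y\<^sup>2) ^ j) * (\<Prod>j<i. y ^ ?e + (y\<^sup>2) ^ (i + j))"
      using prod_split_add[where m=i and n=i] by (simp add: mult_2)
    also have "\<dots> = (y\<^sup>2) ^ tri i * (y ^ ?e) ^ i * ?R\<^sup>2"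
      unfolding p1 p2 by (simp add: power2_eq_square mult_ac)
    finally have X: "(\<Prod>j<2 * i. y ^ ?e + (y\<^sup>2) ^ j) = (y\<^sup>2) ^ tri i * (y ^ ?e) ^ i * ?R\<^sup>2" .
    have "(y\<^sup>2) ^ tri i = y ^ (2 * tri i)" "(y ^ ?e) ^ i = y ^ (?e * i)" by (metis power_mult)+
    then have "y ^ (2 * i) * (\<Prod>j<2 * i. y ^ ?e + (y\<^sup>2) ^ j)
       = y ^ (2 * i + 2 * tri i + ?e * i) * ?R\<^sup>2"
      unfolding X by (simp only: power_add mult_ac)
    then show ?thesis by (simp only: exp_id2)
  qed
qed

lemma finite_id:
  fixes y :: real
  assumes y: "0 < y\<^sup>2" "y\<^sup>2 < 1"
  shows "(\<Sum>a\<le>2 * i. y ^ (a\<^sup>2 + (2 * i - a)\<^sup>2 + a * (2 * i - a)) / (qpoch (y\<^sup>2) (y\<^sup>2) a * qpoch (y\<^sup>2) (y\<^sup>2) (2 * i - a)))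
       = y ^ (3 * i\<^sup>2) * (qpoch (- y) (y\<^sup>2) i)\<^sup>2 / qpoch (y\<^sup>2) (y\<^sup>2) (2 * i)"
proof -
  let ?q = "y\<^sup>2"
  let ?P = "qpoch ?q ?q"
  have Ppos: "\<And>n. 0 < ?P n" using qpoch_qq_pos[OF y] .
  have "?P (2 * i) * (\<Sum>a\<le>2 * i. y ^ (a\<^sup>2 + (2 * i - a)\<^sup>2 + a * (2 * i - a)) / (?P a * ?P (2 * i - a)))
      = (\<Sum>a\<le>2 * i. qb ?q (2 * i) a * y ^ (a\<^sup>2 + (2 * i - a)\<^sup>2 + a * (2 * i - a)))"
    unfolding sum_distrib_left
  proof (intro sum.cong refl)
    fix a assume "a \<in> {..2 * i}"
    then have "qb ?q (2 * i) a = ?P (2 * i) / (?P a * ?P (2 * i - a))"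
      using qb_closed[of a "2 * i" ?q] Ppos[of a] Ppos[of "2*i-a"] by (subst eq_divide_eq) auto
    then show "?P (2 * i) * (y ^ (a\<^sup>2 + (2 * i - a)\<^sup>2 + a * (2 * i - a)) / (?P a * ?P (2 * i - a)))
        = qb ?q (2 * i) a * y ^ (a\<^sup>2 + (2 * i - a)\<^sup>2 + a * (2 * i - a))" by simp
  qed
  also have "\<dots> = (\<Sum>a\<le>2 * i. y ^ (2 * i) * (qb ?q (2 * i) a * ?q ^ tri a * 1 ^ a * (y ^ (2 * i - 1)) ^ (2 * i - a)))"
  proof (intro sum.cong refl)
    fix a assume "a \<in> {..2 * i}"
    then have "a \<le> 2 * i" by simp
    have "y ^ (2 * i) * (qb ?q (2 * i) a * ?q ^ tri a * 1 ^ a * (y ^ (2 * i - 1)) ^ (2 * i - a))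
        = qb ?q (2 * i) a * y ^ (2 * i + 2 * tri a + (2 * i - 1) * (2 * i - a))"
    proof -
      have "(y\<^sup>2) ^ tri a = y ^ (2 * tri a)" "(y ^ (2 * i - 1)) ^ (2 * i - a) = y ^ ((2 * i - 1) * (2 * i - a))"
        by (metis power_mult)+
      then show ?thesis by (simp only: power_add power_one mult_1_right mult_1_left mult_ac)
    qed
    then show "qb ?q (2 * i) a * y ^ (a\<^sup>2 + (2 * i - a)\<^sup>2 + a * (2 * i - a))
        = y ^ (2 * i) * (qb ?q (2 * i) a * ?q ^ tri a * 1 ^ a * (y ^ (2 * i - 1)) ^ (2 * i - a))"
      by (simp only: exp_id1[OF \<open>a \<le> 2 * i\<close>])
  qed
  also have "\<dots> = y ^ (2 * i) * (\<Prod>j<2 * i. y ^ (2 * i - 1) + 1 * ?q ^ j)"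
    by (simp only: qbin_thm sum_distrib_left)
  also have "\<dots> = y ^ (3 * i\<^sup>2) * (qpoch (- y) ?q i)\<^sup>2"
    using prod_lemma[of y i] by (simp add: qpoch_def)
  finally show ?thesis using Ppos[of "2 * i"] by (simp add: field_simps)
qed


definition QQ :: "nat \<Rightarrow> nat \<Rightarrow> nat \<Rightarrow> nat" where
  "QQ i a c = a\<^sup>2 + (2*i-a)\<^sup>2 + a*(2*i-a) + c\<^sup>2 + 2*i*c"

definition Hf :: "real \<Rightarrow> nat \<times> nat \<times> nat \<Rightarrow> real" where
  "Hf y p = (case p of (i,a,c) \<Rightarrow> if a \<le> 2*i then y ^ QQ i a c /
      (qpoch (y\<^sup>2) (y\<^sup>2) a * qpoch (y\<^sup>2) (y\<^sup>2) (2*i-a) * qpoch (y\<^sup>2) (y\<^sup>2) c) else 0)"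

definition Va :: "real \<Rightarrow> nat \<Rightarrow> nat \<Rightarrow> real" where
  "Va y i a = (if a \<le> 2*i then y ^ (a\<^sup>2 + (2*i-a)\<^sup>2 + a*(2*i-a)) /
      (qpoch (y\<^sup>2) (y\<^sup>2) a * qpoch (y\<^sup>2) (y\<^sup>2) (2*i-a)) else 0) * ef (y\<^sup>2) (y * (y\<^sup>2)^i)"

definition Ei :: "real \<Rightarrow> nat \<Rightarrow> real" where
  "Ei y i = qpoch (- y) (y\<^sup>2) i * y ^ (3 * i\<^sup>2) / qpoch (y\<^sup>2) (y\<^sup>2) (2 * i)"

lemma Hf_split:
  assumes "a \<le> 2*i"
  shows "Hf y (i,a,c) = y ^ (a\<^sup>2 + (2*i-a)\<^sup>2 + a*(2*i-a)) /
      (qpoch (y\<^sup>2) (y\<^sup>2) a * qpoch (y\<^sup>2) (y\<^sup>2) (2*i-a)) * (ec (y\<^sup>2) c * (y * (y\<^sup>2)^i) ^ c)"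
proof -
  have "y ^ QQ i a c = y ^ (a\<^sup>2 + (2*i-a)\<^sup>2 + a*(2*i-a)) * ((y\<^sup>2) ^ tri c * (y * (y\<^sup>2)^i) ^ c)"
  proof -
    have "QQ i a c = (a\<^sup>2 + (2*i-a)\<^sup>2 + a*(2*i-a)) + (2 * tri c + (c + 2 * (i * c)))"
      unfolding QQ_def using tri2[of c] by (simp add: algebra_simps)
    then have "y ^ QQ i a c = y ^ (a\<^sup>2 + (2*i-a)\<^sup>2 + a*(2*i-a)) * (y ^ (2 * tri c) * (y ^ c * y ^ (2 * (i * c))))"
      by (simp only: power_add)
    also have "\<dots> = y ^ (a\<^sup>2 + (2*i-a)\<^sup>2 + a*(2*i-a)) * ((y\<^sup>2) ^ tri c * (y * (y\<^sup>2)^i) ^ c)"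
      by (simp only: power_mult power_mult_distrib)
    finally show ?thesis .
  qed
  then show ?thesis using assms unfolding Hf_def ec_def by simp
qed

lemma L_inner:
  fixes y :: real
  assumes y: "0 < y\<^sup>2" "y\<^sup>2 < 1"
  shows "((\<lambda>c. Hf y (i,a,c)) has_sum Va y i a) UNIV"
proof (cases "a \<le> 2*i")
  case True
  have z: "\<bar>y * (y\<^sup>2)^i\<bar> \<le> 1"
  proof -
    have "\<bar>y\<bar> < 1" using y by (simp add: abs_square_less_1)
    moreover have "(y\<^sup>2)^i \<le> 1" using y by (simp add: power_le_one)
    ultimately show ?thesis using y by (simp add: abs_mult mult_le_one power_le_one)
  qed
  have "((\<lambda>c. ec (y\<^sup>2) c * (y * (y\<^sup>2)^i) ^ c) has_sum ef (y\<^sup>2) (y * (y\<^sup>2)^i)) UNIV"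
    by (rule norm_summable_imp_has_sum[OF ec_summable_norm[OF y z] ec_sums[OF y z]])
  then show ?thesis using True unfolding Va_def
    by (simp only: Hf_split[OF True] if_True) (rule has_sum_cmult_right)
next
  case False
  then show ?thesis by (simp add: Hf_def Va_def)
qed

lemma abs_y_lt1: "y\<^sup>2 < 1 \<Longrightarrow> \<bar>y::real\<bar> < 1"
  by (simp add: abs_square_less_1)

lemma L_a:
  fixes y :: real
  assumes y: "0 < y\<^sup>2" "y\<^sup>2 < 1"
  shows "(Va y i has_sum (Ei y i * ef (y\<^sup>2) y)) UNIV"
proof -
  let ?q = "y\<^sup>2"
  have "(Va y i has_sum sum (Va y i) {..2*i}) {..2*i}" by simp
  then have h: "(Va y i has_sum sum (Va y i) {..2*i}) UNIV"
    by (subst (asm) has_sum_cong_neutral[where T=UNIV and g="Va y i"]) (auto simp: Va_def)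
  have qp: "0 < qpoch (- y) ?q i" using qpoch_pos[of "-y" ?q i] abs_y_lt1[OF y(2)] y by simp
  have "sum (Va y i) {..2*i} = (\<Sum>a\<le>2 * i. y ^ (a\<^sup>2 + (2 * i - a)\<^sup>2 + a * (2 * i - a)) / (qpoch ?q ?q a * qpoch ?q ?q (2 * i - a))) * ef ?q (y * ?q ^ i)"
    unfolding Va_def sum_distrib_right by (intro sum.cong refl) auto
  also have "\<dots> = y ^ (3 * i\<^sup>2) * (qpoch (- y) ?q i)\<^sup>2 / qpoch ?q ?q (2 * i) * ef ?q (y * ?q ^ i)"
    by (simp only: finite_id[OF y])
  also have "\<dots> = Ei y i * (qpoch (- y) ?q i * ef ?q (?q ^ i * y))"
    by (simp add: Ei_def power2_eq_square mult_ac)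
  also have "\<dots> = Ei y i * ef ?q y"
    using ef_iter[of ?q y i] y abs_y_lt1[OF y(2)] by simp
  finally show ?thesis using h by simp
qed

lemma Ei_bound:
  fixes y :: real
  assumes y: "0 < y\<^sup>2" "y\<^sup>2 < 1"
  shows "norm (Ei y i) \<le> (y\<^sup>2) ^ tri i * (2 * (1 / (1 - y\<^sup>2))\<^sup>2) ^ i"
proof -
  let ?q = "y\<^sup>2"
  have ay: "\<bar>y\<bar> < 1" by (rule abs_y_lt1[OF y(2)])
  have P: "0 < qpoch ?q ?q (2*i)" using qpoch_qq_pos[OF y] .
  have b1: "\<bar>qpoch (- y) ?q i\<bar> \<le> 2 ^ i"
  proof -
    have "\<bar>qpoch (- y) ?q i\<bar> = (\<Prod>j<i. \<bar>1 + y * ?q ^ j\<bar>)"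
      unfolding qpoch_def by (simp add: abs_prod)
    also have "\<dots> \<le> (\<Prod>j<i. 2)"
    proof (rule prod_mono)
      fix j assume "j \<in> {..<i}"
      have "\<bar>y * ?q ^ j\<bar> \<le> 1" using ay y by (simp add: abs_mult mult_le_one power_le_one)
      then show "0 \<le> \<bar>1 + y * ?q ^ j\<bar> \<and> \<bar>1 + y * ?q ^ j\<bar> \<le> 2" by linarith
    qed
    finally show ?thesis by simp
  qed
  have b2: "\<bar>y\<bar> ^ (3 * i\<^sup>2) \<le> ?q ^ tri i"
  proof -
    have "2 * tri i \<le> 3 * i\<^sup>2" using tri2[of i] by simp
    then have "\<bar>y\<bar> ^ (3 * i\<^sup>2) \<le> \<bar>y\<bar> ^ (2 * tri i)"
      using ay by (intro power_decreasing) auto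
    also have "\<dots> = ?q ^ tri i" by (simp add: power_mult)
    finally show ?thesis .
  qed
  have b3: "1 / qpoch ?q ?q (2*i) \<le> (1 / (1 - ?q)) ^ (2 * i)"
    using qpoch_qq_lower[OF y, of "2*i"] P y by (simp add: power_divide divide_left_mono)
  have "norm (Ei y i) = \<bar>qpoch (- y) ?q i\<bar> * \<bar>y\<bar> ^ (3 * i\<^sup>2) * (1 / qpoch ?q ?q (2*i))"
    unfolding Ei_def using P by (simp add: abs_mult power_abs)
  also have "\<dots> \<le> 2 ^ i * ?q ^ tri i * (1 / (1 - ?q)) ^ (2 * i)"
    using b1 b2 b3 P by (intro mult_mono) auto
  also have "\<dots> = ?q ^ tri i * (2 * (1 / (1 - ?q))\<^sup>2) ^ i"
  proof -
    have e: "(1 / (1 - ?q)) ^ (2 * i) = ((1 / (1 - ?q))\<^sup>2) ^ i" by (rule power_mult)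
    show ?thesis unfolding e power_mult_distrib by (simp only: mult_ac)
  qed
  finally show ?thesis .
qed

lemma Ei_summable:
  fixes y :: real
  assumes y: "0 < y\<^sup>2" "y\<^sup>2 < 1"
  shows "summable (\<lambda>i. norm (Ei y i))"
  by (rule summable_comparison_test[OF _ summable_tri_geom[OF y, of "2 * (1 / (1 - y\<^sup>2))\<^sup>2"]])
     (use Ei_bound[OF y] in auto)

lemma Hf_norm:
  fixes y :: real
  assumes y: "0 < y\<^sup>2" "y\<^sup>2 < 1"
  shows "norm (Hf y p) = Hf \<bar>y\<bar> p"
proof -
  obtain i a c where p: "p = (i,a,c)" by (cases p) auto
  have P: "\<And>n. 0 < qpoch (y\<^sup>2) (y\<^sup>2) n" using qpoch_qq_pos[OF y] .
  show ?thesis unfolding p Hf_def using P[of a] P[of "2*i-a"] P[of c]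
    by (simp add: abs_mult power_abs)
qed

lemma Hf_nonneg:
  fixes y :: real
  assumes y: "0 < y\<^sup>2" "y\<^sup>2 < 1"
  shows "0 \<le> Hf \<bar>y\<bar> p"
  using Hf_norm[OF y, of p] by (metis norm_ge_zero)

lemma L_sum_i_summable:
  fixes y :: real
  assumes y: "0 < y\<^sup>2" "y\<^sup>2 < 1"
  shows "(\<lambda>p. Hf y (i, p)) summable_on UNIV"
proof -
  have y': "0 < \<bar>y\<bar>\<^sup>2" "\<bar>y\<bar>\<^sup>2 < 1" using y by simp_all
  have "(\<lambda>p. Hf \<bar>y\<bar> (i, p)) summable_on Sigma UNIV (\<lambda>_. UNIV)"
  proof (rule summable_on_SigmaI)
    show "\<And>a. a \<in> UNIV \<Longrightarrow> ((\<lambda>c. Hf \<bar>y\<bar> (i, a, c)) has_sum Va \<bar>y\<bar> i a) UNIV"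
      using L_inner[OF y'] by simp
    show "Va \<bar>y\<bar> i summable_on UNIV" using L_a[OF y'] by (rule has_sum_imp_summable)
    show "\<And>a c. a \<in> UNIV \<Longrightarrow> c \<in> UNIV \<Longrightarrow> 0 \<le> Hf \<bar>y\<bar> (i, a, c)"
      using Hf_nonneg[OF y] by simp
  qed
  then have "(\<lambda>p. norm (Hf y (i, p))) summable_on UNIV"
    using Hf_norm[OF y] by simp
  then show ?thesis
    using summable_on_iff_abs_summable_on_real by blast
qed

lemma L_sum_i:
  fixes y :: real
  assumes y: "0 < y\<^sup>2" "y\<^sup>2 < 1"
  shows "((\<lambda>p. Hf y (i, p)) has_sum (Ei y i * ef (y\<^sup>2) y)) UNIV"
proof -
  have "((\<lambda>p. Hf y (i, p)) has_sum (Ei y i * ef (y\<^sup>2) y)) (Sigma UNIV (\<lambda>_. UNIV))"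
  proof (rule has_sum_SigmaI)
    show "\<And>a. a \<in> UNIV \<Longrightarrow> ((\<lambda>c. Hf y (i, a, c)) has_sum Va y i a) UNIV"
      using L_inner[OF y] by simp
    show "(Va y i has_sum Ei y i * ef (y\<^sup>2) y) UNIV" by (rule L_a[OF y])
    show "(\<lambda>p. Hf y (i, p)) summable_on Sigma UNIV (\<lambda>_. UNIV)"
      using L_sum_i_summable[OF y] by simp
  qed
  then show ?thesis by simp
qed

lemma W_has_sum:
  fixes y :: real
  assumes y: "0 < y\<^sup>2" "y\<^sup>2 < 1"
  shows "((\<lambda>i. Ei y i * ef (y\<^sup>2) y) has_sum (suminf (Ei y) * ef (y\<^sup>2) y)) UNIV"
proof (rule norm_summable_imp_has_sum)
  show "summable (\<lambda>i. norm (Ei y i * ef (y\<^sup>2) y))"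
    using summable_mult2[OF Ei_summable[OF y], of "norm (ef (y\<^sup>2) y)"] by (simp add: abs_mult)
  show "(\<lambda>i. Ei y i * ef (y\<^sup>2) y) sums (suminf (Ei y) * ef (y\<^sup>2) y)"
    by (intro sums_mult2 summable_sums summable_norm_cancel[OF Ei_summable[OF y]])
qed

lemma L_total:
  fixes y :: real
  assumes y: "0 < y\<^sup>2" "y\<^sup>2 < 1"
  shows "(Hf y has_sum (suminf (Ei y) * ef (y\<^sup>2) y)) UNIV"
proof -
  have y': "0 < \<bar>y\<bar>\<^sup>2" "\<bar>y\<bar>\<^sup>2 < 1" using y by simp_all
  have "Hf \<bar>y\<bar> summable_on Sigma UNIV (\<lambda>_. UNIV)"
  proof (rule summable_on_SigmaI)
    show "\<And>i. i \<in> UNIV \<Longrightarrow> ((\<lambda>p. Hf \<bar>y\<bar> (i, p)) has_sum (Ei \<bar>y\<bar> i * ef (\<bar>y\<bar>\<^sup>2) \<bar>y\<bar>)) UNIV"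
      using L_sum_i[OF y'] by simp
    show "(\<lambda>i. Ei \<bar>y\<bar> i * ef (\<bar>y\<bar>\<^sup>2) \<bar>y\<bar>) summable_on UNIV"
      using W_has_sum[OF y'] by (rule has_sum_imp_summable)
    show "\<And>i p. i \<in> UNIV \<Longrightarrow> p \<in> UNIV \<Longrightarrow> 0 \<le> Hf \<bar>y\<bar> (i, p)"
      using Hf_nonneg[OF y] by simp
  qed
  then have "(\<lambda>p. norm (Hf y p)) summable_on UNIV"
    using Hf_norm[OF y] by simp
  then have sm: "Hf y summable_on UNIV"
    using summable_on_iff_abs_summable_on_real by blast
  have "(Hf y has_sum (suminf (Ei y) * ef (y\<^sup>2) y)) (Sigma UNIV (\<lambda>_. UNIV))"
  proof (rule has_sum_SigmaI)
    show "\<And>i. i \<in> UNIV \<Longrightarrow> ((\<lambda>p. Hf y (i, p)) has_sum (Ei y i * ef (y\<^sup>2) y)) UNIV"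
      using L_sum_i[OF y] by simp
    show "((\<lambda>i. Ei y i * ef (y\<^sup>2) y) has_sum (suminf (Ei y) * ef (y\<^sup>2) y)) UNIV"
      by (rule W_has_sum[OF y])
    show "Hf y summable_on Sigma UNIV (\<lambda>_. UNIV)" using sm by simp
  qed
  then show ?thesis by simp
qed


lemma QQ_ijk:
  assumes "k \<le> i+j" "j \<le> i+k" "i \<le> j+k"
  shows "QQ i (i+j-k) (j+k-i) = 2*(i\<^sup>2+j\<^sup>2+k\<^sup>2)"
proof -
  have e: "2*i - (i+j-k) = i+k-j" using assms by simp
  have "int (QQ i (i+j-k) (j+k-i)) = int (2*(i\<^sup>2+j\<^sup>2+k\<^sup>2))"
  proof -
    have ha: "int (i+j-k) = int i + int j - int k" and hb: "int (i+k-j) = int i + int k - int j"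
      and hc: "int (j+k-i) = int j + int k - int i" using assms by (simp_all add: of_nat_diff)
    show ?thesis unfolding QQ_def e
      by (simp only: of_nat_add of_nat_mult of_nat_power ha hb hc of_nat_numeral) (simp add: power2_eq_square algebra_simps)
  qed
  then show ?thesis by (simp only: of_nat_eq_iff)
qed

lemma QQ_parity:
  assumes "a \<le> 2*i"
  shows "even (QQ i a c) \<longleftrightarrow> even (a+c)"
proof -
  have "even (2*i - a) \<longleftrightarrow> even a" using assms by (simp add: even_diff_nat)
  then show ?thesis unfolding QQ_def by (auto simp: even_mult_iff)
qed

lemma Hf_phi:
  fixes y q :: real
  assumes yq: "y\<^sup>2 = q" and S: "k \<le> i+j" "j \<le> i+k" "i \<le> j+k"
  shows "Hf y (i, i+j-k, j+k-i) = q ^ (i\<^sup>2+j\<^sup>2+k\<^sup>2) / (qpoch q q (i+j-k) * qpoch q q (i+k-j) * qpoch q q (j+k-i))"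
proof -
  have e: "2*i - (i+j-k) = i+k-j" using S by simp
  have le: "i+j-k \<le> 2*i" using S by simp
  have "y ^ QQ i (i+j-k) (j+k-i) = q ^ (i\<^sup>2+j\<^sup>2+k\<^sup>2)"
    unfolding QQ_ijk[OF S] power_mult yq ..
  then show ?thesis unfolding Hf_def using le e yq by simp
qed

lemma Hf_odd:
  fixes y :: real
  assumes "a \<le> 2*i" "odd (a+c)"
  shows "Hf (-y) (i,a,c) = - Hf y (i,a,c)"
proof -
  have "odd (QQ i a c)" using QQ_parity[OF assms(1)] assms(2) by simp
  then show ?thesis unfolding Hf_def using assms by (simp add: power_minus_odd)
qed

lemma neg1_pow: "(-1::real) ^ (3 * i\<^sup>2) = (-1) ^ i"
  by (cases "even i") (auto simp: even_mult_iff)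

theorem mainTheorem19:
  fixes q :: real
  assumes "0 < q" "q < 1"
  shows "((\<lambda>(i::nat, j::nat, k::nat).
            q ^ (i\<^sup>2 + j\<^sup>2 + k\<^sup>2)
            * qinv q (int i + int j - int k)
            * qinv q (int i + int k - int j)
            * qinv q (int j + int k - int i))
         has_sum
          (1/2 * qpoch_inf (- sqrt q) q
               * (\<Sum>i. qpoch (- sqrt q) q i * sqrt q ^ (3 * i\<^sup>2) / qpoch q q (2 * i))
         + 1/2 * qpoch_inf (sqrt q) q
               * (\<Sum>i. qpoch (sqrt q) q i * sqrt q ^ (3 * i\<^sup>2) * (-1) ^ i / qpoch q q (2 * i))))
         UNIV"
proof -
  define x where "x = sqrt q"
  have x2: "x\<^sup>2 = q" using assms unfolding x_def by simp
  have x: "0 < x\<^sup>2" "x\<^sup>2 < 1" using assms x2 by auto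
  have mx: "0 < (-x)\<^sup>2" "(-x)\<^sup>2 < 1" using x by auto
  have ax: "\<bar>x\<bar> \<le> 1" using abs_y_lt1[OF x(2)] by simp
  have ax': "\<bar>-x\<bar> \<le> 1" using ax by simp
  have hx: "(Hf x has_sum (suminf (Ei x) * ef q x)) UNIV" using L_total[OF x] x2 by simp
  have hmx: "(Hf (-x) has_sum (suminf (Ei (-x)) * ef q (-x))) UNIV" using L_total[OF mx] x2 by simp
  define L where "L = 1/2 * qpoch_inf (- x) q * (\<Sum>i. qpoch (- x) q i * x ^ (3 * i\<^sup>2) / qpoch q q (2 * i))
         + 1/2 * qpoch_inf x q * (\<Sum>i. qpoch x q i * x ^ (3 * i\<^sup>2) * (-1) ^ i / qpoch q q (2 * i))"
  define M where "M = (\<lambda>p. 1/2 * Hf x p + 1/2 * Hf (-x) p)"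
  have E1: "Ei x = (\<lambda>i. qpoch (- x) q i * x ^ (3 * i\<^sup>2) / qpoch q q (2 * i))"
    unfolding Ei_def x2 ..
  have E2: "Ei (-x) = (\<lambda>i. qpoch x q i * x ^ (3 * i\<^sup>2) * (-1) ^ i / qpoch q q (2 * i))"
    unfolding Ei_def using x2 by (auto simp: power_minus[of x] neg1_pow mult_ac)
  have Q1: "qpoch_inf (- x) q = ef q x" using qpoch_inf_eq[OF assms ax] .
  have Q2: "qpoch_inf x q = ef q (- x)" using qpoch_inf_eq[OF assms ax'] by simp
  have hM: "(M has_sum L) UNIV"
  proof -
    have "(M has_sum (1/2 * (suminf (Ei x) * ef q x) + 1/2 * (suminf (Ei (-x)) * ef q (-x)))) UNIV"
      unfolding M_def by (intro has_sum_add has_sum_cmult_right hx hmx)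
    moreover have "1/2 * (suminf (Ei x) * ef q x) + 1/2 * (suminf (Ei (-x)) * ef q (-x)) = L"
      unfolding L_def Q1 Q2 E1[symmetric] E2[symmetric] by (simp add: mult_ac)
    ultimately show ?thesis by simp
  qed
  define T where "T = (\<lambda>(i::nat, j::nat, k::nat).
            q ^ (i\<^sup>2 + j\<^sup>2 + k\<^sup>2)
            * qinv q (int i + int j - int k)
            * qinv q (int i + int k - int j)
            * qinv q (int j + int k - int i))"
  define S where "S = {(i::nat,j::nat,k::nat). k \<le> i+j \<and> j \<le> i+k \<and> i \<le> j+k}"
  define B where "B = {(i::nat,a::nat,c::nat). a \<le> 2*i \<and> even (a+c)}"
  have hB: "(M has_sum L) B"
  proof (subst has_sum_cong_neutral[where T=UNIV and g=M])
    show "(M has_sum L) UNIV" by (rule hM)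
    fix p assume "p \<in> UNIV - B"
    then obtain i a c where p: "p = (i,a,c)" "\<not> (a \<le> 2*i \<and> even (a+c))"
      unfolding B_def by (cases p) auto
    show "M p = 0"
    proof (cases "a \<le> 2*i")
      case True
      with p have "odd (a+c)" by simp
      then show ?thesis unfolding M_def p(1) using Hf_odd[OF True, of c x] by simp
    next
      case False
      then show ?thesis unfolding M_def p(1) Hf_def by simp
    qed
  qed auto
  have hS: "(T has_sum L) S"
  proof (subst has_sum_reindex_bij_witness[where T=B and h=M and s'=L
            and i="\<lambda>(i,a,c). (i, (a+c) div 2, (2*i - a + c) div 2)"
            and j="\<lambda>(i,j,k). (i, i+j-k, j+k-i)"])
    show "(M has_sum L) B" by (rule hB)
    fix p assume "p \<in> S"
    then obtain i j k where p: "p = (i,j,k)" "k \<le> i+j" "j \<le> i+k" "i \<le> j+k"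
      unfolding S_def by (cases p) auto
    show "(\<lambda>(i,a,c). (i, (a+c) div 2, (2*i - a + c) div 2)) ((\<lambda>(i,j,k). (i, i+j-k, j+k-i)) p) = p"
      using p by auto
    show "(\<lambda>(i,j,k). (i, i+j-k, j+k-i)) p \<in> B"
      using p unfolding B_def by auto
    have "M ((\<lambda>(i,j,k). (i, i+j-k, j+k-i)) p) = q ^ (i\<^sup>2+j\<^sup>2+k\<^sup>2) / (qpoch q q (i+j-k) * qpoch q q (i+k-j) * qpoch q q (j+k-i))"
      unfolding M_def p(1) using Hf_phi[OF x2 p(2-4)] Hf_phi[of "-x" q, OF _ p(2-4)] x2 by simp
    also have "\<dots> = T p"
    proof -
      have "nat (int i + int j - int k) = i+j-k" "nat (int i + int k - int j) = i+k-j"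
        "nat (int j + int k - int i) = j+k-i" using p(2-4) by auto
      then show ?thesis unfolding T_def p(1) qinv_def using p(2-4) by simp
    qed
    finally show "M ((\<lambda>(i,j,k). (i, i+j-k, j+k-i)) p) = T p" .
  next
    fix b assume "b \<in> B"
    then obtain i a c where b: "b = (i,a,c)" "a \<le> 2*i" "even (a+c)"
      unfolding B_def by (cases b) auto
    from b(3) obtain m where m: "a + c = 2*m" by (rule evenE)
    show "(\<lambda>(i,j,k). (i, i+j-k, j+k-i)) ((\<lambda>(i,a,c). (i, (a+c) div 2, (2*i - a + c) div 2)) b) = b"
      using b m by auto
    show "(\<lambda>(i,a,c). (i, (a+c) div 2, (2*i - a + c) div 2)) b \<in> S"
      using b m unfolding S_def by auto
  qed auto
  have "(T has_sum L) UNIV"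
  proof (subst has_sum_cong_neutral[where S=UNIV and f=T and T=S and g=T])
    show "(T has_sum L) S" by (rule hS)
    fix p assume "p \<in> UNIV - S"
    then obtain i j k where p: "p = (i,j,k)" "\<not> (k \<le> i+j \<and> j \<le> i+k \<and> i \<le> j+k)"
      unfolding S_def by (cases p) auto
    then show "T p = 0" unfolding T_def qinv_def by auto
  qed auto
  then show ?thesis unfolding T_def L_def x_def .
qed


end
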